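(* Let $\Gamma$ be a connected $\mathbb Z$-leg-weighted graph with edge set $E$, and let $F_\Gamma$ be the set of all faces of the cones $c_w$ as $w$ runs over $W(\Gamma)$. Then $F_\Gamma$ is a finite fan in $\mathbb Q_{\ge0}^E$.
   Context: A graph consists of finite sets $V$ (vertices) and $H$ (half-edges), a map $\mathrm{end}\colon H\to V$, an involution $i$ of $H$, a genus $g\colon V\to\mathbb Z_{\ge0}$ and an integer twist $k$. Legs are fixed points of $i$; edges are pairs $\{h,i(h)\}$ with $h\ne i(h)$; a directed edge is a non-leg half-edge $h$ from $\mathrm{end}(h)$ to $\mathrm{end}(i(h))$. $\mathrm{val}(v)$ counts non-leg half-edges at $v$, $\kappa(v)=2g(v)-2+\mathrm{val}(v)$, $g(\Gamma)=b_1(\Gamma)+\sum_v g(v)$. A cycle is a closed walk of directed edges repeating no vertex or undirected edge. A weighting is $w\colon H\to\mathbb Z$ with $w(h)+w(i(h))=0$ for $h\ne i(h)$ and $\sum_{\mathrm{end}(h)=v}w(h)+k\kappa(v)=0$ for all $v$; $W(\Gamma)$ is the set of weightings with prescribed integer leg values (summing to $-k(2g(\Gamma)-2)$). For a directed edge $e$ of a cycle $\gamma$, $w_\gamma(e)$ is the value of $w$ at the source half-edge of $e$. $c_w\subseteq\mathbb Q_{\ge0}^E$ is the cone of $t$ with $\sum_{e\in\gamma}w_\gamma(e)t(e)=0$ for all cycles $\gamma$. *)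

theory Defs
  imports Complex_Main
begin

text \<open>A graph: vertex set V, half-edge set H, map endp : H -> V, involution iv of H,
  genus gen : V -> nat.  Types 'v of vertices and 'h of half-edges.\<close>

definition is_graph :: "'v set \<Rightarrow> 'h set \<Rightarrow> ('h \<Rightarrow> 'v) \<Rightarrow> ('h \<Rightarrow> 'h) \<Rightarrow> bool" where
  "is_graph V H endp iv \<longleftrightarrow> finite V \<and> finite H \<and> endp ` H \<subseteq> V \<and> iv ` H \<subseteq> H
     \<and> (\<forall>h\<in>H. iv (iv h) = h)"

definition is_leg :: "('h \<Rightarrow> 'h) \<Rightarrow> 'h \<Rightarrow> bool" where
  "is_leg iv h \<longleftrightarrow> iv h = h"

definition edges :: "'h set \<Rightarrow> ('h \<Rightarrow> 'h) \<Rightarrow> 'h set set" where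
  "edges H iv = {{h, iv h} | h. h \<in> H \<and> iv h \<noteq> h}"

definition val :: "'h set \<Rightarrow> ('h \<Rightarrow> 'v) \<Rightarrow> ('h \<Rightarrow> 'h) \<Rightarrow> 'v \<Rightarrow> nat" where
  "val H endp iv v = card {h \<in> H. endp h = v \<and> iv h \<noteq> h}"

definition kappa :: "'h set \<Rightarrow> ('h \<Rightarrow> 'v) \<Rightarrow> ('h \<Rightarrow> 'h) \<Rightarrow> ('v \<Rightarrow> nat) \<Rightarrow> 'v \<Rightarrow> int" where
  "kappa H endp iv gen v = 2 * int (gen v) - 2 + int (val H endp iv v)"

definition connected_graph :: "'v set \<Rightarrow> 'h set \<Rightarrow> ('h \<Rightarrow> 'v) \<Rightarrow> ('h \<Rightarrow> 'h) \<Rightarrow> bool" where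
  "connected_graph V H endp iv \<longleftrightarrow> V \<noteq> {} \<and>
     (\<forall>u\<in>V. \<forall>v\<in>V. (u, v) \<in> {(endp h, endp (iv h)) | h. h \<in> H \<and> iv h \<noteq> h}\<^sup>*)"

text \<open>Genus of a connected graph: b_1 + sum of vertex genera, with b_1 = |E| - |V| + 1.\<close>
definition graph_genus :: "'v set \<Rightarrow> 'h set \<Rightarrow> ('h \<Rightarrow> 'h) \<Rightarrow> ('v \<Rightarrow> nat) \<Rightarrow> int" where
  "graph_genus V H iv gen =
     int (card (edges H iv)) - int (card V) + 1 + (\<Sum>v\<in>V. int (gen v))"

text \<open>Cycles: closed walks of directed edges h_0, ..., h_{n-1} (non-leg half-edges, each
  directed from endp h_j to endp (iv h_j)), repeating no vertex and no undirected edge.\<close>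
definition is_cycle :: "'h set \<Rightarrow> ('h \<Rightarrow> 'v) \<Rightarrow> ('h \<Rightarrow> 'h) \<Rightarrow> 'h list \<Rightarrow> bool" where
  "is_cycle H endp iv c \<longleftrightarrow> c \<noteq> [] \<and> set c \<subseteq> H \<and> (\<forall>h\<in>set c. iv h \<noteq> h)
     \<and> (\<forall>j<length c. endp (iv (c ! j)) = endp (c ! ((j + 1) mod length c)))
     \<and> distinct (map endp c) \<and> distinct (map (\<lambda>h. {h, iv h}) c)"

definition is_weighting :: "'v set \<Rightarrow> 'h set \<Rightarrow> ('h \<Rightarrow> 'v) \<Rightarrow> ('h \<Rightarrow> 'h) \<Rightarrow> ('v \<Rightarrow> nat)
     \<Rightarrow> int \<Rightarrow> ('h \<Rightarrow> int) \<Rightarrow> bool" where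
  "is_weighting V H endp iv gen k w \<longleftrightarrow>
     (\<forall>h\<in>H. iv h \<noteq> h \<longrightarrow> w h + w (iv h) = 0)
     \<and> (\<forall>v\<in>V. (\<Sum>h\<in>{h\<in>H. endp h = v}. w h) + k * kappa H endp iv gen v = 0)"

definition weightings :: "'v set \<Rightarrow> 'h set \<Rightarrow> ('h \<Rightarrow> 'v) \<Rightarrow> ('h \<Rightarrow> 'h) \<Rightarrow> ('v \<Rightarrow> nat)
     \<Rightarrow> int \<Rightarrow> ('h \<Rightarrow> int) \<Rightarrow> ('h \<Rightarrow> int) set" where
  "weightings V H endp iv gen k lw =
     {w. is_weighting V H endp iv gen k w \<and> (\<forall>h\<in>H. iv h = h \<longrightarrow> w h = lw h)
         \<and> (\<forall>h. h \<notin> H \<longrightarrow> w h = 0)}"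

definition QE :: "'e set \<Rightarrow> ('e \<Rightarrow> rat) set" where
  "QE E = {t. \<forall>e. e \<notin> E \<longrightarrow> t e = 0}"

definition QE_nonneg :: "'e set \<Rightarrow> ('e \<Rightarrow> rat) set" where
  "QE_nonneg E = {t \<in> QE E. \<forall>e\<in>E. t e \<ge> 0}"

definition pairing :: "'e set \<Rightarrow> ('e \<Rightarrow> rat) \<Rightarrow> ('e \<Rightarrow> rat) \<Rightarrow> rat" where
  "pairing E u t = (\<Sum>e\<in>E. u e * t e)"

definition cone_w :: "'h set \<Rightarrow> ('h \<Rightarrow> 'v) \<Rightarrow> ('h \<Rightarrow> 'h) \<Rightarrow> ('h \<Rightarrow> int) \<Rightarrow> ('h set \<Rightarrow> rat) set" where
  "cone_w H endp iv w =
     {t \<in> QE_nonneg (edges H iv). \<forall>c. is_cycle H endp iv c \<longrightarrow>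
        (\<Sum>j<length c. of_int (w (c ! j)) * t {c ! j, iv (c ! j)}) = 0}"

definition polyhedral_cone :: "'e set \<Rightarrow> ('e \<Rightarrow> rat) set \<Rightarrow> bool" where
  "polyhedral_cone E C \<longleftrightarrow> (\<exists>U. finite U \<and> C = {t \<in> QE E. \<forall>u\<in>U. pairing E u t \<ge> 0})"

text \<open>Faces of a cone: intersections with supporting hyperplanes (u = 0 gives C itself).\<close>
definition face_of_cone :: "'e set \<Rightarrow> ('e \<Rightarrow> rat) set \<Rightarrow> ('e \<Rightarrow> rat) set \<Rightarrow> bool" where
  "face_of_cone E C F \<longleftrightarrow> (\<exists>u. (\<forall>t\<in>C. pairing E u t \<ge> 0) \<and> F = {t \<in> C. pairing E u t = 0})"

definition finite_fan :: "'e set \<Rightarrow> ('e \<Rightarrow> rat) set set \<Rightarrow> bool" where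
  "finite_fan E \<F> \<longleftrightarrow> finite \<F>
     \<and> (\<forall>C\<in>\<F>. polyhedral_cone E C \<and> C \<subseteq> QE_nonneg E)
     \<and> (\<forall>C\<in>\<F>. \<forall>F. face_of_cone E C F \<longrightarrow> F \<in> \<F>)
     \<and> (\<forall>C1\<in>\<F>. \<forall>C2\<in>\<F>. face_of_cone E C1 (C1 \<inter> C2) \<and> face_of_cone E C2 (C1 \<inter> C2))"

end

theory Submission imports Defs begin

fun walk :: "('h \<Rightarrow> 'v) \<Rightarrow> ('h \<Rightarrow> 'h) \<Rightarrow> 'h list \<Rightarrow> 'v \<Rightarrow> 'v \<Rightarrow> bool" where
  "walk endp iv [] a b = (a = b)"
| "walk endp iv (h # p) a b = (endp h = a \<and> walk endp iv p (endp (iv h)) b)"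

lemma walk_rtrancl:
  assumes "(a, b) \<in> {(endp h, endp (iv h)) | h. h \<in> S}\<^sup>*"
  shows "\<exists>p. set p \<subseteq> S \<and> walk endp iv p a b"
  using assms
proof (induction rule: rtrancl_induct)
  case base
  show ?case by (rule exI[of _ "[]"]) simp
next
  case (step y z)
  then obtain p where p: "set p \<subseteq> S" "walk endp iv p a y" by blast
  from step(2) obtain h where h: "h \<in> S" "y = endp h" "z = endp (iv h)" by blast
  have "walk endp iv (p @ [h]) a z"
  proof -
    have "\<And>a. walk endp iv p a y \<Longrightarrow> walk endp iv (p @ [h]) a z"
      by (induction p) (use h in auto)
    then show ?thesis using p by blast
  qed
  then show ?case using p h by (intro exI[of _ "p @ [h]"]) auto
qed

lemma walk_drop:
  "walk endp iv q m b \<Longrightarrow> i < length q \<Longrightarrow> walk endp iv (drop i q) (endp (q ! i)) b"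
proof (induction q arbitrary: m i)
  case Nil then show ?case by simp
next
  case (Cons h q)
  show ?case
  proof (cases i)
    case 0 then show ?thesis using Cons by simp
  next
    case (Suc i')
    then show ?thesis using Cons by auto
  qed
qed

lemma walk_nil_ex: "a = b \<Longrightarrow> \<exists>q. set q \<subseteq> A \<and> walk endp iv q a b \<and> distinct (map endp q) \<and> b \<notin> endp ` set q"
  by (rule exI[of _ "[]"]) simp

lemma walk_simple:
  "walk endp iv p a b \<Longrightarrow> \<exists>q. set q \<subseteq> set p \<and> walk endp iv q a b \<and> distinct (map endp q) \<and> b \<notin> endp ` set q"
proof (induction p arbitrary: a)
  case Nil
  then have "a = b" by simp
  then show ?case by (rule walk_nil_ex)
next
  case (Cons h p)
  have ha: "endp h = a" and w: "walk endp iv p (endp (iv h)) b" using Cons.prems by auto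
  from Cons.IH[OF w] obtain q where q: "set q \<subseteq> set p" "walk endp iv q (endp (iv h)) b"
    "distinct (map endp q)" "b \<notin> endp ` set q" by blast
  show ?case
  proof (cases "a = b")
    case True
    then show ?thesis by (rule walk_nil_ex)
  next
    case False
    show ?thesis
    proof (cases "a \<in> endp ` set q")
      case True
      then obtain x where x: "x \<in> set q" "endp x = a" by blast
      then obtain i where i0: "i < length q" "q ! i = x" by (auto simp: in_set_conv_nth)
      have i: "i < length q" "endp (q ! i) = a" using i0 x by auto
      have "walk endp iv (drop i q) a b" using walk_drop[OF q(2) i(1)] i(2) by simp
      moreover have "set (drop i q) \<subseteq> set q" by (simp add: set_drop_subset)
      moreover have "distinct (map endp (drop i q))" using q(3) distinct_drop[of "map endp q" i] by (simp only: drop_map)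
      moreover have "b \<notin> endp ` set (drop i q)" using q(4) image_mono[OF set_drop_subset[of i q], of endp] by blast
      moreover have "set (drop i q) \<subseteq> set (h # p)" using q(1) set_drop_subset by fastforce
      ultimately have "set (drop i q) \<subseteq> set (h # p) \<and> walk endp iv (drop i q) a b \<and> distinct (map endp (drop i q)) \<and> b \<notin> endp ` set (drop i q)" by blast
      then show ?thesis by (rule exI)
    next
      case False
      have "set (h # q) \<subseteq> set (h # p)" using q(1) by auto
      moreover have "walk endp iv (h # q) a b" using q(2) ha by simp
      moreover have "distinct (map endp (h # q))" using q(3) ha False by simp
      moreover have "b \<notin> endp ` set (h # q)" using q(4) ha \<open>a \<noteq> b\<close> by simp
      ultimately have "set (h # q) \<subseteq> set (h # p) \<and> walk endp iv (h # q) a b \<and> distinct (map endp (h # q)) \<and> b \<notin> endp ` set (h # q)" by blast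
      then show ?thesis by (rule exI)
    qed
  qed
qed

lemma walk_next:
  "walk endp iv p a b \<Longrightarrow> endp x = b \<Longrightarrow> j < length p \<Longrightarrow> endp (iv (p ! j)) = endp ((p @ [x]) ! (j + 1))"
proof (induction p arbitrary: a j)
  case Nil then show ?case by simp
next
  case (Cons h p)
  have w: "walk endp iv p (endp (iv h)) b" using Cons.prems(1) by simp
  show ?case
  proof (cases j)
    case 0
    show ?thesis
    proof (cases p)
      case Nil
      then have "endp (iv h) = b" using w by simp
      then show ?thesis using Nil 0 Cons.prems(2) by simp
    next
      case (Cons y p')
      then have "endp y = endp (iv h)" using w by simp
      then show ?thesis using Cons 0 by simp
    qed
  next
    case (Suc j')
    have "j' < length p" using Cons.prems(3) Suc by simp
    from Cons.IH[OF w Cons.prems(2) this] show ?thesis using Suc by simp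
  qed
qed

lemma nth_append_mod:
  "p \<noteq> [] \<Longrightarrow> j < length p \<Longrightarrow> (p @ [p ! 0]) ! (j + 1) = p ! ((j + 1) mod length p)"
proof (cases "j + 1 < length p")
  case True then show ?thesis by (simp add: nth_append)
next
  case False
  assume "j < length p"
  then have "j + 1 = length p" using False by simp
  then show ?thesis by (simp add: nth_append)
qed

lemma cycle_of_walk:
  assumes g: "is_graph V H endp iv"
    and anti: "\<forall>h\<in>H. iv h \<noteq> h \<longrightarrow> d (iv h) = - d h"
    and h0: "h0 \<in> H" "iv h0 \<noteq> h0" "(d h0::int) > 0"
    and qS: "set q \<subseteq> {h\<in>H. iv h \<noteq> h \<and> d h > 0}"
    and qw: "walk endp iv q (endp (iv h0)) (endp h0)"
    and qd: "distinct (map endp q)" and qn: "endp h0 \<notin> endp ` set q"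
  shows "is_cycle H endp iv (h0 # q)"
proof -
  let ?c = "h0 # q"
  have cS: "set ?c \<subseteq> {h\<in>H. iv h \<noteq> h \<and> d h > 0}" using qS h0 by auto
  have cw: "walk endp iv ?c (endp h0) (endp h0)" using qw by simp
  have conn: "\<forall>j<length ?c. endp (iv (?c ! j)) = endp (?c ! ((j + 1) mod length ?c))"
  proof (intro allI impI)
    fix j assume j: "j < length ?c"
    have "endp (iv (?c ! j)) = endp ((?c @ [?c ! 0]) ! (j + 1))"
      using walk_next[OF cw _ j, of "?c ! 0"] by simp
    also have "\<dots> = endp (?c ! ((j + 1) mod length ?c))"
      using nth_append_mod[of ?c j] j by simp
    finally show "endp (iv (?c ! j)) = endp (?c ! ((j + 1) mod length ?c))" .
  qed
  have dm: "distinct (map endp ?c)" using qd qn by simp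
  then have "distinct ?c \<and> inj_on endp (set ?c)" by (simp only: distinct_map)
  then have dc: "distinct ?c" by (rule conjunct1)
  have inj: "inj_on (\<lambda>h. {h, iv h}) (set ?c)"
  proof (rule inj_onI)
    fix a b assume a: "a \<in> set ?c" and b: "b \<in> set ?c" and e: "{a, iv a} = {b, iv b}"
    show "a = b"
    proof (rule ccontr)
      assume "a \<noteq> b"
      have "a = b \<and> iv a = iv b \<or> a = iv b \<and> iv a = b" using e by (simp only: doubleton_eq_iff)
      then have "a = iv b" using \<open>a \<noteq> b\<close> by blast
      moreover have "b \<in> H" "iv b \<noteq> b" "d b > 0" "d a > 0" using a b cS by auto
      ultimately show False using anti by auto
    qed
  qed
  have "distinct (map (\<lambda>h. {h, iv h}) ?c)" using dc inj by (simp add: distinct_map)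
  moreover have "?c \<noteq> []" by simp
  moreover have "set ?c \<subseteq> H" "\<forall>h\<in>set ?c. iv h \<noteq> h" using cS by auto
  ultimately show ?thesis unfolding is_cycle_def using conn dm by blast
qed

lemma reach_set:
  assumes g: "is_graph V H endp iv"
    and t: "t \<in> QE_nonneg (edges H iv)"
    and cyc: "\<forall>c. is_cycle H endp iv c \<longrightarrow> (\<Sum>j<length c. of_int (d (c ! j)) * t {c ! j, iv (c ! j)}) = 0"
    and anti: "\<forall>h\<in>H. iv h \<noteq> h \<longrightarrow> d (iv h) = - d h"
    and h0: "h0 \<in> H" "iv h0 \<noteq> h0" "(d h0::int) > 0" "t {h0, iv h0} > 0"
  shows "\<exists>R \<subseteq> V. endp (iv h0) \<in> R \<and> endp h0 \<notin> R \<and>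
           (\<forall>h\<in>H. endp h \<in> R \<longrightarrow> iv h \<noteq> h \<longrightarrow> endp (iv h) \<notin> R \<longrightarrow> d h \<le> 0)"
proof -
  define S where "S = {h\<in>H. iv h \<noteq> h \<and> d h > 0}"
  define A where "A = {(endp h, endp (iv h)) | h. h \<in> S}"
  define R where "R = A\<^sup>* `` {endp (iv h0)}"
  have gH: "endp ` H \<subseteq> V" "iv ` H \<subseteq> H" "\<forall>h\<in>H. iv (iv h) = h" "finite H"
    using g unfolding is_graph_def by auto
  have v1: "endp (iv h0) \<in> V" using gH h0 by auto
  have RV: "R \<subseteq> V"
  proof
    fix x assume "x \<in> R"
    then have "(endp (iv h0), x) \<in> A\<^sup>*" unfolding R_def by simp
    then show "x \<in> V"
    proof (induction rule: rtrancl_induct)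
      case base then show ?case using v1 .
    next
      case (step y z)
      then obtain h where "h \<in> S" "z = endp (iv h)" unfolding A_def by blast
      then show ?case using gH unfolding S_def by auto
    qed
  qed
  have v1R: "endp (iv h0) \<in> R" unfolding R_def by simp
  have clos: "\<forall>h\<in>H. endp h \<in> R \<longrightarrow> iv h \<noteq> h \<longrightarrow> endp (iv h) \<notin> R \<longrightarrow> d h \<le> 0"
  proof (intro ballI impI)
    fix h assume h: "h \<in> H" "endp h \<in> R" "iv h \<noteq> h" "endp (iv h) \<notin> R"
    show "d h \<le> 0"
    proof (rule ccontr)
      assume "\<not> d h \<le> 0"
      then have "h \<in> S" using h unfolding S_def by auto
      then have 1: "(endp h, endp (iv h)) \<in> A" unfolding A_def by blast
      have "(endp (iv h0), endp h) \<in> A\<^sup>*" using h(2) unfolding R_def by simp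
      from this 1 have "(endp (iv h0), endp (iv h)) \<in> A\<^sup>*" by (rule rtrancl_into_rtrancl)
      then show False using h(4) unfolding R_def by simp
    qed
  qed
  have u0: "endp h0 \<notin> R"
  proof
    assume "endp h0 \<in> R"
    then have "(endp (iv h0), endp h0) \<in> {(endp h, endp (iv h)) | h. h \<in> S}\<^sup>*"
      unfolding R_def A_def by simp
    from walk_rtrancl[OF this] obtain p where p: "set p \<subseteq> S" "walk endp iv p (endp (iv h0)) (endp h0)"
      by blast
    from walk_simple[OF p(2)] obtain q where q: "set q \<subseteq> set p" "walk endp iv q (endp (iv h0)) (endp h0)"
      "distinct (map endp q)" "endp h0 \<notin> endp ` set q" by blast
    have qS: "set q \<subseteq> {h\<in>H. iv h \<noteq> h \<and> d h > 0}" using q(1) p(1) unfolding S_def by blast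
    have cyc0: "is_cycle H endp iv (h0 # q)"
      using cycle_of_walk[OF g anti h0(1,2,3) qS q(2,3,4)] .
    let ?c = "h0 # q"
    have cS: "set ?c \<subseteq> {h\<in>H. iv h \<noteq> h \<and> d h > 0}" using qS h0 by auto
    have tnn: "\<And>h. h \<in> H \<Longrightarrow> iv h \<noteq> h \<Longrightarrow> t {h, iv h} \<ge> 0"
    proof -
      fix h assume "h \<in> H" "iv h \<noteq> h"
      then have "{h, iv h} \<in> edges H iv" unfolding edges_def by blast
      then show "t {h, iv h} \<ge> 0" using t unfolding QE_nonneg_def by blast
    qed
    have pos: "0 < (\<Sum>j<length ?c. of_int (d (?c ! j)) * t {?c ! j, iv (?c ! j)})"
    proof (rule sum_pos2[of _ 0])
      show "finite {..<length ?c}" by simp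
      show "0 \<in> {..<length ?c}" by simp
      show "0 < of_int (d (?c ! 0)) * t {?c ! 0, iv (?c ! 0)}" using h0 by simp
      fix j assume "j \<in> {..<length ?c}"
      then have "j < length ?c" by simp
      then have "?c ! j \<in> set ?c" by (rule nth_mem)
      then have "?c ! j \<in> H" "iv (?c ! j) \<noteq> ?c ! j" "d (?c ! j) > 0" using cS by blast+
      then show "0 \<le> of_int (d (?c ! j)) * t {?c ! j, iv (?c ! j)}"
        using tnn by (simp add: less_imp_le)
    qed
    have "(\<Sum>j<length ?c. of_int (d (?c ! j)) * t {?c ! j, iv (?c ! j)}) = 0"
      using cyc cyc0 by blast
    then show False using pos by linarith
  qed
  show ?thesis using RV v1R u0 clos by blast
qed

lemma sum_cut:
  assumes g: "is_graph V H endp iv"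
    and anti: "\<forall>h\<in>H. iv h \<noteq> h \<longrightarrow> d (iv h) = - d h"
    and h0: "h0 \<in> H" "iv h0 \<noteq> h0"
    and R: "endp (iv h0) \<in> R" "endp h0 \<notin> R"
    and clos: "\<forall>h\<in>H. endp h \<in> R \<longrightarrow> iv h \<noteq> h \<longrightarrow> endp (iv h) \<notin> R \<longrightarrow> (d h::int) \<le> 0"
  shows "(\<Sum>h\<in>{h\<in>H. endp h \<in> R}. d h) \<le> (\<Sum>h\<in>{h\<in>H. endp h \<in> R \<and> iv h = h}. d h) - d h0"
proof -
  have gH: "iv ` H \<subseteq> H" "\<forall>h\<in>H. iv (iv h) = h" "finite H"
    using g unfolding is_graph_def by auto
  define L where "L = {h\<in>H. endp h \<in> R \<and> iv h = h}"
  define I where "I = {h\<in>H. endp h \<in> R \<and> iv h \<noteq> h \<and> endp (iv h) \<in> R}"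
  define C where "C = {h\<in>H. endp h \<in> R \<and> iv h \<noteq> h \<and> endp (iv h) \<notin> R}"
  have fin: "finite L" "finite I" "finite C" unfolding L_def I_def C_def using gH by auto
  have split: "{h\<in>H. endp h \<in> R} = L \<union> (I \<union> C)" unfolding L_def I_def C_def by auto
  have disj: "L \<inter> (I \<union> C) = {}" "I \<inter> C = {}" unfolding L_def I_def C_def by auto
  have sumX: "(\<Sum>h\<in>{h\<in>H. endp h \<in> R}. d h) = sum d L + (sum d I + sum d C)"
    unfolding split using fin disj by (simp add: sum.union_disjoint)
  have "sum d I = (\<Sum>h\<in>I. d (iv h))"
    by (rule sum.reindex_bij_witness[of _ iv iv]) (use gH in \<open>auto simp: I_def\<close>)
  also have "\<dots> = (\<Sum>h\<in>I. - d h)" using anti unfolding I_def by (intro sum.cong) auto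
  also have "\<dots> = - sum d I" by (simp add: sum_negf)
  finally have sI: "sum d I = 0" by simp
  have ivC: "iv h0 \<in> C" unfolding C_def using h0 R gH by auto
  have "sum d C = d (iv h0) + sum d (C - {iv h0})" using fin(3) ivC by (simp add: sum.remove)
  moreover have "sum d (C - {iv h0}) \<le> 0"
    by (rule sum_nonpos) (use clos in \<open>auto simp: C_def\<close>)
  moreover have "d (iv h0) = - d h0" using anti h0 by auto
  ultimately have sC: "sum d C \<le> - d h0" by simp
  show ?thesis using sumX sI sC unfolding L_def by simp
qed

lemma sum_vertices:
  assumes "finite H" "finite R"
  shows "(\<Sum>h\<in>{h\<in>H. endp h \<in> R}. (d h::int)) = (\<Sum>v\<in>R. \<Sum>h\<in>{h\<in>H. endp h = v}. d h)"
proof -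
  have "(\<Sum>v\<in>R. \<Sum>h\<in>{x. x \<in> {h\<in>H. endp h \<in> R} \<and> endp x = v}. d h) = (\<Sum>h\<in>{h\<in>H. endp h \<in> R}. d h)"
    by (rule sum.group) (use assms in auto)
  moreover have "(\<Sum>v\<in>R. \<Sum>h\<in>{x. x \<in> {h\<in>H. endp h \<in> R} \<and> endp x = v}. d h) = (\<Sum>v\<in>R. \<Sum>h\<in>{h\<in>H. endp h = v}. d h)"
    by (intro sum.cong refl) auto
  ultimately show ?thesis by simp
qed


lemma weighting_facts:
  assumes "w \<in> weightings V H endp iv gen k lw"
  shows "\<forall>h\<in>H. iv h \<noteq> h \<longrightarrow> w (iv h) = - w h"
    and "\<forall>v\<in>V. (\<Sum>h\<in>{h\<in>H. endp h = v}. w h) = - (k * kappa H endp iv gen v)"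
    and "\<forall>h\<in>H. iv h = h \<longrightarrow> w h = lw h"
  using assms unfolding weightings_def is_weighting_def
  by (auto simp: algebra_simps eq_neg_iff_add_eq_0)

lemma edge_in: "h \<in> H \<Longrightarrow> iv h \<noteq> h \<Longrightarrow> {h, iv h} \<in> edges H iv"
  unfolding edges_def by blast

lemma cone_cyc: "t \<in> cone_w H endp iv w \<Longrightarrow> \<forall>c. is_cycle H endp iv c \<longrightarrow>
    (\<Sum>j<length c. of_int (w (c ! j)) * t {c ! j, iv (c ! j)}) = 0"
  unfolding cone_w_def by blast

lemma cone_nonneg: "cone_w H endp iv w \<subseteq> QE_nonneg (edges H iv)"
  unfolding cone_w_def by blast

lemma uniq_weight:
  assumes g: "is_graph V H endp iv"
    and w: "w \<in> weightings V H endp iv gen k lw" and w': "w' \<in> weightings V H endp iv gen k lw"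
    and t: "t \<in> cone_w H endp iv w" "t \<in> cone_w H endp iv w'"
    and h: "h \<in> H" "iv h \<noteq> h" "t {h, iv h} > 0"
  shows "w h = w' h"
proof -
  define d where "d = (\<lambda>h. w h - w' h)"
  have gH: "endp ` H \<subseteq> V" "iv ` H \<subseteq> H" "\<forall>h\<in>H. iv (iv h) = h" "finite H" "finite V"
    using g unfolding is_graph_def by auto
  note wf = weighting_facts[OF w] and wf' = weighting_facts[OF w']
  have anti: "\<forall>h\<in>H. iv h \<noteq> h \<longrightarrow> d (iv h) = - d h" using wf(1) wf'(1) unfolding d_def by auto
  have tn: "t \<in> QE_nonneg (edges H iv)" using t(1) cone_nonneg by blast
  have cyc: "\<forall>c. is_cycle H endp iv c \<longrightarrow> (\<Sum>j<length c. of_int (d (c ! j)) * t {c ! j, iv (c ! j)}) = 0"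
  proof (intro allI impI)
    fix c assume c: "is_cycle H endp iv c"
    have "(\<Sum>j<length c. of_int (d (c ! j)) * t {c ! j, iv (c ! j)}) =
      (\<Sum>j<length c. of_int (w (c ! j)) * t {c ! j, iv (c ! j)}) - (\<Sum>j<length c. of_int (w' (c ! j)) * t {c ! j, iv (c ! j)})"
      unfolding d_def by (simp add: sum_subtractf[symmetric] left_diff_distrib)
    then show "(\<Sum>j<length c. of_int (d (c ! j)) * t {c ! j, iv (c ! j)}) = 0"
      using cone_cyc[OF t(1)] cone_cyc[OF t(2)] c by simp
  qed
  have vs: "\<forall>v\<in>V. (\<Sum>h\<in>{h\<in>H. endp h = v}. d h) = 0"
    using wf(2) wf'(2) unfolding d_def by (simp add: sum_subtractf)
  have legs: "\<forall>h\<in>H. iv h = h \<longrightarrow> d h = 0" using wf(3) wf'(3) unfolding d_def by simp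
  have key: "\<not> d h0 > 0" if h0: "h0 \<in> H" "iv h0 \<noteq> h0" "t {h0, iv h0} > 0" for h0
  proof
    assume dp: "d h0 > 0"
    obtain R where R: "R \<subseteq> V" "endp (iv h0) \<in> R" "endp h0 \<notin> R"
      "\<forall>h\<in>H. endp h \<in> R \<longrightarrow> iv h \<noteq> h \<longrightarrow> endp (iv h) \<notin> R \<longrightarrow> d h \<le> 0"
      using reach_set[OF g tn cyc anti h0(1,2) dp h0(3)] by blast
    have sc: "(\<Sum>h\<in>{h\<in>H. endp h \<in> R}. d h) \<le> (\<Sum>h\<in>{h\<in>H. endp h \<in> R \<and> iv h = h}. d h) - d h0"
      using sum_cut[OF g anti h0(1,2) R(2,3,4)] .
    have fR: "finite R" using R(1) gH(5) finite_subset by blast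
    have "(\<Sum>h\<in>{h\<in>H. endp h \<in> R}. d h) = (\<Sum>v\<in>R. \<Sum>h\<in>{h\<in>H. endp h = v}. d h)"
      using sum_vertices[OF gH(4) fR] .
    also have "\<dots> = 0" using vs R(1) by (intro sum.neutral) blast
    finally have s0: "(\<Sum>h\<in>{h\<in>H. endp h \<in> R}. d h) = 0" .
    have l0: "(\<Sum>h\<in>{h\<in>H. endp h \<in> R \<and> iv h = h}. d h) = 0" using legs by (intro sum.neutral) blast
    show False using sc s0 l0 dp by linarith
  qed
  have ivh: "iv h \<in> H" "iv (iv h) \<noteq> iv h" using gH h by auto
  have "t {iv h, iv (iv h)} > 0" using h gH by (simp add: insert_commute)
  then have "\<not> d (iv h) > 0" using key[OF ivh] by blast
  moreover have "\<not> d h > 0" using key[OF h] .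
  moreover have "d (iv h) = - d h" using anti h by blast
  ultimately show ?thesis unfolding d_def by linarith
qed

definition bnd :: "'v set \<Rightarrow> 'h set \<Rightarrow> ('h \<Rightarrow> 'v) \<Rightarrow> ('h \<Rightarrow> 'h) \<Rightarrow> ('v \<Rightarrow> nat) \<Rightarrow> int \<Rightarrow> ('h \<Rightarrow> int) \<Rightarrow> int" where
  "bnd V H endp iv gen k lw = (\<Sum>h\<in>{h\<in>H. iv h = h}. \<bar>lw h\<bar>) + (\<Sum>v\<in>V. \<bar>k * kappa H endp iv gen v\<bar>)"

lemma bound_weight:
  assumes g: "is_graph V H endp iv"
    and w: "w \<in> weightings V H endp iv gen k lw"
    and t: "t \<in> cone_w H endp iv w"
    and h: "h \<in> H" "iv h \<noteq> h" "t {h, iv h} > 0"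
  shows "\<bar>w h\<bar> \<le> bnd V H endp iv gen k lw"
proof -
  have gH: "endp ` H \<subseteq> V" "iv ` H \<subseteq> H" "\<forall>h\<in>H. iv (iv h) = h" "finite H" "finite V"
    using g unfolding is_graph_def by auto
  note wf = weighting_facts[OF w]
  have tn: "t \<in> QE_nonneg (edges H iv)" using t cone_nonneg by blast
  note cyc = cone_cyc[OF t]
  have Bnn: "bnd V H endp iv gen k lw \<ge> 0" unfolding bnd_def by (intro add_nonneg_nonneg sum_nonneg) auto
  have key: "w h0 \<le> bnd V H endp iv gen k lw" if h0: "h0 \<in> H" "iv h0 \<noteq> h0" "t {h0, iv h0} > 0" for h0
  proof (cases "w h0 > 0")
    case False then show ?thesis using Bnn by linarith
  next
    case dp: True
    obtain R where R: "R \<subseteq> V" "endp (iv h0) \<in> R" "endp h0 \<notin> R"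
      "\<forall>h\<in>H. endp h \<in> R \<longrightarrow> iv h \<noteq> h \<longrightarrow> endp (iv h) \<notin> R \<longrightarrow> w h \<le> 0"
      using reach_set[OF g tn cyc wf(1) h0(1,2) dp h0(3)] by blast
    have sc: "(\<Sum>h\<in>{h\<in>H. endp h \<in> R}. w h) \<le> (\<Sum>h\<in>{h\<in>H. endp h \<in> R \<and> iv h = h}. w h) - w h0"
      using sum_cut[OF g wf(1) h0(1,2) R(2,3,4)] .
    have fR: "finite R" using R(1) gH(5) finite_subset by blast
    have "(\<Sum>h\<in>{h\<in>H. endp h \<in> R}. w h) = (\<Sum>v\<in>R. \<Sum>h\<in>{h\<in>H. endp h = v}. w h)"
      using sum_vertices[OF gH(4) fR] .
    also have "\<dots> = (\<Sum>v\<in>R. - (k * kappa H endp iv gen v))" using wf(2) R(1) by (intro sum.cong) auto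
    also have "\<dots> \<ge> - (\<Sum>v\<in>R. \<bar>k * kappa H endp iv gen v\<bar>)"
      by (simp add: sum_negf[symmetric] sum_mono)
    finally have s1: "(\<Sum>h\<in>{h\<in>H. endp h \<in> R}. w h) \<ge> - (\<Sum>v\<in>R. \<bar>k * kappa H endp iv gen v\<bar>)" .
    have s2: "(\<Sum>v\<in>R. \<bar>k * kappa H endp iv gen v\<bar>) \<le> (\<Sum>v\<in>V. \<bar>k * kappa H endp iv gen v\<bar>)"
      by (rule sum_mono2) (use R(1) gH(5) in auto)
    have "(\<Sum>h\<in>{h\<in>H. endp h \<in> R \<and> iv h = h}. w h) = (\<Sum>h\<in>{h\<in>H. endp h \<in> R \<and> iv h = h}. lw h)"
      using wf(3) by (intro sum.cong) auto
    also have "\<dots> \<le> (\<Sum>h\<in>{h\<in>H. endp h \<in> R \<and> iv h = h}. \<bar>lw h\<bar>)" by (intro sum_mono) auto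
    also have "\<dots> \<le> (\<Sum>h\<in>{h\<in>H. iv h = h}. \<bar>lw h\<bar>)" by (rule sum_mono2) (use gH(4) in auto)
    finally have s3: "(\<Sum>h\<in>{h\<in>H. endp h \<in> R \<and> iv h = h}. w h) \<le> (\<Sum>h\<in>{h\<in>H. iv h = h}. \<bar>lw h\<bar>)" .
    show ?thesis using sc s1 s2 s3 unfolding bnd_def by linarith
  qed
  have ivh: "iv h \<in> H" "iv (iv h) \<noteq> iv h" using gH h by auto
  have "t {iv h, iv (iv h)} > 0" using h gH by (simp add: insert_commute)
  then have "w (iv h) \<le> bnd V H endp iv gen k lw" using key[OF ivh] by blast
  moreover have "w h \<le> bnd V H endp iv gen k lw" using key[OF h] .
  moreover have "w (iv h) = - w h" using wf(1) h by blast
  ultimately show ?thesis by linarith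
qed

definition Zs :: "'e set \<Rightarrow> ('e \<Rightarrow> rat) set" where
  "Zs T = {t. \<forall>e\<in>T. t e = 0}"

definition lincone :: "'e set \<Rightarrow> ('e \<Rightarrow> rat) set \<Rightarrow> bool" where
  "lincone E C \<longleftrightarrow> (\<lambda>e. 0) \<in> C \<and> C \<subseteq> QE_nonneg E \<and>
     (\<forall>a\<in>C. \<forall>b\<in>C. \<forall>x y. (\<lambda>e. x * a e + y * b e) \<in> QE_nonneg E \<longrightarrow> (\<lambda>e. x * a e + y * b e) \<in> C)"

lemma lincone_cone_w: "lincone (edges H iv) (cone_w H endp iv w)"
proof -
  have z: "(\<lambda>e. 0) \<in> cone_w H endp iv w"
    unfolding cone_w_def QE_nonneg_def QE_def by simp
  have lin: "(\<lambda>e. x * a e + y * b e) \<in> cone_w H endp iv w"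
    if a: "a \<in> cone_w H endp iv w" and b: "b \<in> cone_w H endp iv w"
      and q: "(\<lambda>e. x * a e + y * b e) \<in> QE_nonneg (edges H iv)" for a b x y
  proof -
    have "(\<Sum>j<length c. of_int (w (c ! j)) * (x * a {c ! j, iv (c ! j)} + y * b {c ! j, iv (c ! j)})) = 0"
      if c: "is_cycle H endp iv c" for c
    proof -
      have "(\<Sum>j<length c. of_int (w (c ! j)) * (x * a {c ! j, iv (c ! j)} + y * b {c ! j, iv (c ! j)}))
        = x * (\<Sum>j<length c. of_int (w (c ! j)) * a {c ! j, iv (c ! j)}) + y * (\<Sum>j<length c. of_int (w (c ! j)) * b {c ! j, iv (c ! j)})"
        by (simp add: sum.distrib sum_distrib_left algebra_simps)
      also have "\<dots> = 0" using cone_cyc[OF a] cone_cyc[OF b] c by simp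
      finally show ?thesis .
    qed
    then show ?thesis using q unfolding cone_w_def by blast
  qed
  show ?thesis unfolding lincone_def using z lin cone_nonneg by blast
qed

lemma lincone_Z: "lincone E C \<Longrightarrow> lincone E (C \<inter> Zs T)"
  unfolding lincone_def Zs_def by auto

lemma face_Z:
  assumes fE: "finite E" and C: "C \<subseteq> QE_nonneg E" and T: "T \<subseteq> E"
  shows "face_of_cone E C (C \<inter> Zs T)"
proof -
  define u where "u = (\<lambda>e. if e \<in> T then (1::rat) else 0)"
  have fT: "finite T" using fE T finite_subset by blast
  have pe: "pairing E u t = (\<Sum>e\<in>T. t e)" for t
  proof -
    have "pairing E u t = (\<Sum>e\<in>E. if e \<in> T then t e else 0)"
      unfolding pairing_def u_def by (intro sum.cong) auto
    also have "\<dots> = (\<Sum>e\<in>E \<inter> T. t e)" using fE by (simp add: sum.inter_restrict)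
    also have "E \<inter> T = T" using T by blast
    finally show ?thesis .
  qed
  have nn: "\<And>t e. t \<in> C \<Longrightarrow> e \<in> T \<Longrightarrow> t e \<ge> 0" using C T unfolding QE_nonneg_def by blast
  have 1: "\<forall>t\<in>C. pairing E u t \<ge> 0" using nn by (simp add: pe sum_nonneg)
  have 2: "C \<inter> Zs T = {t \<in> C. pairing E u t = 0}"
  proof -
    have "t \<in> Zs T \<longleftrightarrow> pairing E u t = 0" if "t \<in> C" for t
      using sum_nonneg_eq_0_iff[OF fT, of t] nn[OF that] unfolding pe Zs_def by blast
    then show ?thesis by blast
  qed
  show ?thesis unfolding face_of_cone_def using 1 2 by blast
qed

lemma archi:
  assumes "finite S" "\<forall>e\<in>S. (g::'e \<Rightarrow> rat) e > 0"
  shows "\<exists>N::nat. \<forall>e\<in>S. f e \<le> of_nat N * g e"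
  using assms
proof (induction S rule: finite_induct)
  case empty then show ?case by simp
next
  case (insert x S)
  then obtain N1 where N1: "\<forall>e\<in>S. f e \<le> of_nat N1 * g e" by auto
  obtain N2 where N2: "f x / g x \<le> of_nat N2" using reals_Archimedean2[of "f x / g x"] less_imp_le by blast
  have gx: "g x > 0" using insert by simp
  have "\<forall>e\<in>insert x S. f e \<le> of_nat (N1 + N2) * g e"
  proof
    fix e assume e: "e \<in> insert x S"
    show "f e \<le> of_nat (N1 + N2) * g e"
    proof (cases "e = x")
      case True
      have "f x \<le> of_nat N2 * g x" using N2 gx by (simp add: divide_le_eq)
      also have "\<dots> \<le> of_nat (N1 + N2) * g x" using gx by (intro mult_right_mono) auto
      finally show ?thesis using True by simp
    next
      case False
      then have "e \<in> S" "g e > 0" using e insert by auto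
      then have "f e \<le> of_nat N1 * g e" using N1 by blast
      also have "\<dots> \<le> of_nat (N1 + N2) * g e" using \<open>g e > 0\<close> by (intro mult_right_mono) auto
      finally show ?thesis .
    qed
  qed
  then show ?case by blast
qed

lemma pairing_lin: "pairing E u (\<lambda>e. x * a e + y * b e) = x * pairing E u a + y * pairing E u b"
  unfolding pairing_def by (simp add: sum.distrib sum_distrib_left algebra_simps)

lemma face_char:
  assumes fE: "finite E" and L: "lincone E C" and F: "face_of_cone E C F"
  shows "\<exists>T\<subseteq>E. F = C \<inter> Zs T \<and> (\<exists>t0\<in>F. \<forall>e\<in>E - T. t0 e > 0)"
proof -
  obtain u where u: "\<forall>t\<in>C. pairing E u t \<ge> 0" and Fd: "F = {t \<in> C. pairing E u t = 0}"
    using F unfolding face_of_cone_def by blast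
  have L0: "(\<lambda>e. 0) \<in> C" and LC: "C \<subseteq> QE_nonneg E"
    and Ll: "\<And>a b x y. a \<in> C \<Longrightarrow> b \<in> C \<Longrightarrow> (\<lambda>e. x * a e + y * b e) \<in> QE_nonneg E \<Longrightarrow> (\<lambda>e. x * a e + y * b e) \<in> C"
    using L unfolding lincone_def by blast+
  define T where "T = {e\<in>E. \<forall>t\<in>F. t e = 0}"
  define s where "s = (\<lambda>e. SOME t. t \<in> F \<and> t e \<noteq> 0)"
  have s: "s e \<in> F \<and> s e e \<noteq> 0" if "e \<in> E - T" for e
  proof -
    have "\<exists>t. t \<in> F \<and> t e \<noteq> 0" using that unfolding T_def by blast
    then show ?thesis unfolding s_def by (rule someI_ex)
  qed
  have FC: "F \<subseteq> C" using Fd by blast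
  have nnC: "\<And>t e. t \<in> C \<Longrightarrow> e \<in> E \<Longrightarrow> t e \<ge> 0" "\<And>t e. t \<in> C \<Longrightarrow> e \<notin> E \<Longrightarrow> t e = 0"
    using LC unfolding QE_nonneg_def QE_def by blast+
  have addF: "(\<lambda>e. a e + b e) \<in> F" if "a \<in> F" "b \<in> F" for a b
  proof -
    have ab: "a \<in> C" "b \<in> C" using that FC by blast+
    have "(\<lambda>e. 1 * a e + 1 * b e) \<in> QE_nonneg E"
      unfolding QE_nonneg_def QE_def
    proof (intro CollectI conjI allI impI ballI)
      fix e assume "e \<notin> E" then show "1 * a e + 1 * b e = 0" using nnC(2)[OF ab(1)] nnC(2)[OF ab(2)] by simp
    next
      fix e assume "e \<in> E" then show "0 \<le> 1 * a e + 1 * b e" using nnC(1)[OF ab(1)] nnC(1)[OF ab(2)] by simp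
    qed
    then have "(\<lambda>e. 1 * a e + 1 * b e) \<in> C" using Ll ab by blast
    moreover have "pairing E u (\<lambda>e. 1 * a e + 1 * b e) = 0"
      using that Fd pairing_lin[of E u 1 a 1 b] by simp
    ultimately show ?thesis using Fd by simp
  qed
  have zF: "(\<lambda>e. 0) \<in> F" using L0 Fd unfolding pairing_def by simp
  have sumF: "(\<lambda>x. \<Sum>e\<in>S. s e x) \<in> F" if "finite S" "S \<subseteq> E - T" for S
    using that
  proof (induction S rule: finite_induct)
    case empty then show ?case using zF by simp
  next
    case (insert e S)
    then have "s e \<in> F" "(\<lambda>x. \<Sum>e\<in>S. s e x) \<in> F" using s by auto
    from addF[OF this] show ?case using insert by simp
  qed
  define t0 where "t0 = (\<lambda>x. \<Sum>e\<in>E - T. s e x)"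
  have t0F: "t0 \<in> F" unfolding t0_def using sumF fE by blast
  have t0pos: "\<forall>e\<in>E - T. t0 e > 0"
  proof
    fix e assume e: "e \<in> E - T"
    have se: "s e \<in> C" "s e e \<noteq> 0" using s[OF e] FC by auto
    then have "s e e > 0" using nnC(1)[OF se(1)] e by force
    also have "s e e \<le> t0 e" unfolding t0_def
    proof (rule member_le_sum)
      show "e \<in> E - T" by fact
      show "finite (E - T)" using fE by simp
      fix x assume "x \<in> E - T - {e}"
      then show "0 \<le> s x e" using s FC nnC(1) e by blast
    qed
    finally show "t0 e > 0" .
  qed
  have "F = C \<inter> Zs T"
  proof
    show "F \<subseteq> C \<inter> Zs T" using FC unfolding T_def Zs_def by blast
  next
    show "C \<inter> Zs T \<subseteq> F"
    proof
      fix t assume t: "t \<in> C \<inter> Zs T"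
      obtain N where N: "\<forall>e\<in>E - T. t e \<le> of_nat N * t0 e"
        using archi[of "E - T" t0 t] fE t0pos by auto
      have t0C: "t0 \<in> C" using t0F FC by blast
      have t0T: "\<forall>e\<in>T. t0 e = 0" using t0F unfolding T_def by blast
      have tC: "t \<in> C" and tT: "\<forall>e\<in>T. t e = 0" using t unfolding Zs_def by auto
      have "(\<lambda>e. of_nat N * t0 e + (-1) * t e) \<in> QE_nonneg E"
        unfolding QE_nonneg_def QE_def
      proof (intro CollectI conjI allI impI ballI)
        fix e assume "e \<notin> E" then show "of_nat N * t0 e + (-1) * t e = 0"
          using nnC(2)[OF t0C] nnC(2)[OF tC] by simp
      next
        fix e assume e: "e \<in> E"
        show "0 \<le> of_nat N * t0 e + (-1) * t e"
        proof (cases "e \<in> T")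
          case True then show ?thesis using t0T tT by simp
        next
          case False then show ?thesis using N e by force
        qed
      qed
      then have "(\<lambda>e. of_nat N * t0 e + (-1) * t e) \<in> C" using Ll t0C tC by blast
      then have "pairing E u (\<lambda>e. of_nat N * t0 e + (-1) * t e) \<ge> 0" using u by blast
      moreover have "pairing E u t0 = 0" using t0F Fd by blast
      moreover have "pairing E u (\<lambda>e. of_nat N * t0 e + (-1) * t e) = of_nat N * pairing E u t0 + (-1) * pairing E u t"
        by (rule pairing_lin)
      ultimately have "pairing E u t \<le> 0" by simp
      moreover have "pairing E u t \<ge> 0" using u tC by blast
      ultimately show "t \<in> F" using Fd tC by simp
    qed
  qed
  moreover have "T \<subseteq> E" unfolding T_def by blast
  ultimately show ?thesis using t0F t0pos by blast
qed


lemma finite_edges: "is_graph V H endp iv \<Longrightarrow> finite (edges H iv)"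
proof -
  assume g: "is_graph V H endp iv"
  have "edges H iv \<subseteq> (\<lambda>h. {h, iv h}) ` H" unfolding edges_def by blast
  moreover have "finite H" using g unfolding is_graph_def by blast
  ultimately show ?thesis using finite_subset by blast
qed

lemma Zs_Un: "Zs (A \<union> B) = Zs A \<inter> Zs B"
  unfolding Zs_def by blast

lemma cone_agree_sub:
  assumes ag: "\<forall>h\<in>H. iv h \<noteq> h \<longrightarrow> w h = w' h \<or> {h, iv h} \<in> T"
  shows "cone_w H endp iv w \<inter> Zs T \<subseteq> cone_w H endp iv w' \<inter> Zs T"
proof
  fix t assume t: "t \<in> cone_w H endp iv w \<inter> Zs T"
  have cyc: "(\<Sum>j<length c. of_int (w' (c ! j)) * t {c ! j, iv (c ! j)}) = 0" if c: "is_cycle H endp iv c" for c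
  proof -
    have "(\<Sum>j<length c. of_int (w' (c ! j)) * t {c ! j, iv (c ! j)}) = (\<Sum>j<length c. of_int (w (c ! j)) * t {c ! j, iv (c ! j)})"
    proof (rule sum.cong[OF refl])
      fix j assume "j \<in> {..<length c}"
      then have "c ! j \<in> set c" by simp
      then have "c ! j \<in> H" "iv (c ! j) \<noteq> c ! j" using c unfolding is_cycle_def by blast+
      then have "w (c ! j) = w' (c ! j) \<or> {c ! j, iv (c ! j)} \<in> T" using ag by blast
      moreover have "{c ! j, iv (c ! j)} \<in> T \<Longrightarrow> t {c ! j, iv (c ! j)} = 0" using t unfolding Zs_def by blast
      ultimately show "of_int (w' (c ! j)) * t {c ! j, iv (c ! j)} = of_int (w (c ! j)) * t {c ! j, iv (c ! j)}"
        by auto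
    qed
    also have "\<dots> = 0" using cone_cyc[of t H endp iv w] t c by blast
    finally show ?thesis .
  qed
  show "t \<in> cone_w H endp iv w' \<inter> Zs T" using t cyc unfolding cone_w_def by blast
qed

lemma cone_agree:
  assumes ag: "\<forall>h\<in>H. iv h \<noteq> h \<longrightarrow> w h = w' h \<or> {h, iv h} \<in> T"
  shows "cone_w H endp iv w \<inter> Zs T = cone_w H endp iv w' \<inter> Zs T"
proof
  show "cone_w H endp iv w \<inter> Zs T \<subseteq> cone_w H endp iv w' \<inter> Zs T" by (rule cone_agree_sub[OF ag])
  have "\<forall>h\<in>H. iv h \<noteq> h \<longrightarrow> w' h = w h \<or> {h, iv h} \<in> T" using ag by metis
  then show "cone_w H endp iv w' \<inter> Zs T \<subseteq> cone_w H endp iv w \<inter> Zs T" by (rule cone_agree_sub)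
qed

definition Dw :: "'h set \<Rightarrow> ('h \<Rightarrow> 'h) \<Rightarrow> ('h \<Rightarrow> int) \<Rightarrow> ('h \<Rightarrow> int) \<Rightarrow> 'h set set" where
  "Dw H iv w w' = {e \<in> edges H iv. \<exists>h\<in>H. iv h \<noteq> h \<and> e = {h, iv h} \<and> w h \<noteq> w' h}"

lemma inter_cone:
  assumes g: "is_graph V H endp iv"
    and w: "w \<in> weightings V H endp iv gen k lw" and w': "w' \<in> weightings V H endp iv gen k lw"
  shows "cone_w H endp iv w \<inter> cone_w H endp iv w' = cone_w H endp iv w \<inter> Zs (Dw H iv w w')"
proof
  show "cone_w H endp iv w \<inter> cone_w H endp iv w' \<subseteq> cone_w H endp iv w \<inter> Zs (Dw H iv w w')"
  proof
    fix t assume t: "t \<in> cone_w H endp iv w \<inter> cone_w H endp iv w'"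
    have "t e = 0" if e: "e \<in> Dw H iv w w'" for e
    proof -
      obtain h where h: "h \<in> H" "iv h \<noteq> h" "e = {h, iv h}" "w h \<noteq> w' h" using e unfolding Dw_def by blast
      have "e \<in> edges H iv" using e unfolding Dw_def by blast
      then have "t e \<ge> 0" using t cone_nonneg unfolding QE_nonneg_def by blast
      moreover have "\<not> t e > 0"
      proof
        assume "t e > 0"
        then have "w h = w' h" using uniq_weight[OF g w w' _ _ h(1,2)] t h(3) by blast
        then show False using h(4) by blast
      qed
      ultimately show ?thesis by linarith
    qed
    then show "t \<in> cone_w H endp iv w \<inter> Zs (Dw H iv w w')" using t unfolding Zs_def by blast
  qed
next
  have ag: "\<forall>h\<in>H. iv h \<noteq> h \<longrightarrow> w h = w' h \<or> {h, iv h} \<in> Dw H iv w w'"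
    unfolding Dw_def edges_def by blast
  show "cone_w H endp iv w \<inter> Zs (Dw H iv w w') \<subseteq> cone_w H endp iv w \<inter> cone_w H endp iv w'"
    using cone_agree[OF ag] by blast
qed

lemma Dw_sub: "Dw H iv w w' \<subseteq> edges H iv" unfolding Dw_def by blast


lemma finite_cycles:
  assumes g: "is_graph V H endp iv"
  shows "finite {c. is_cycle H endp iv c}"
proof -
  have fH: "finite H" using g unfolding is_graph_def by blast
  have "{c. is_cycle H endp iv c} \<subseteq> {xs. set xs \<subseteq> H \<and> length xs \<le> card H}"
  proof
    fix c assume "c \<in> {c. is_cycle H endp iv c}"
    then have c: "set c \<subseteq> H" "distinct (map endp c)" unfolding is_cycle_def by auto
    then have "distinct c" by (simp add: distinct_map)
    then have "length c = card (set c)" by (simp add: distinct_card)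
    also have "\<dots> \<le> card H" by (rule card_mono[OF fH c(1)])
    finally show "c \<in> {xs. set xs \<subseteq> H \<and> length xs \<le> card H}" using c(1) by blast
  qed
  moreover have "finite {xs. set xs \<subseteq> H \<and> length xs \<le> card H}" by (rule finite_lists_length_le[OF fH])
  ultimately show ?thesis using finite_subset by blast
qed

lemma pairing_delta:
  assumes "finite E" "e0 \<in> E"
  shows "pairing E (\<lambda>e. if e = e0 then 1 else 0) t = t e0"
proof -
  have "pairing E (\<lambda>e. if e = e0 then 1 else 0) t = (\<Sum>e\<in>E. if e = e0 then t e else 0)"
    unfolding pairing_def by (intro sum.cong) auto
  also have "\<dots> = t e0" using assms by simp
  finally show ?thesis .
qed

lemma pairing_neg: "pairing E (\<lambda>e. - u e) t = - pairing E u t"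
  unfolding pairing_def by (simp add: sum_negf)

lemma pairing_cyc:
  assumes fE: "finite E" and cE: "\<forall>j<length c. {c ! j, iv (c ! j)} \<in> E"
  shows "pairing E (\<lambda>e. \<Sum>j<length c. if {c ! j, iv (c ! j)} = e then of_int (w (c ! j)) else 0) t
       = (\<Sum>j<length c. of_int (w (c ! j)) * t {c ! j, iv (c ! j)})"
proof -
  have "pairing E (\<lambda>e. \<Sum>j<length c. if {c ! j, iv (c ! j)} = e then of_int (w (c ! j)) else 0) t
      = (\<Sum>e\<in>E. \<Sum>j<length c. if {c ! j, iv (c ! j)} = e then of_int (w (c ! j)) * t e else 0)"
    unfolding pairing_def sum_distrib_right by (intro sum.cong refl) auto
  also have "\<dots> = (\<Sum>j<length c. \<Sum>e\<in>E. if {c ! j, iv (c ! j)} = e then of_int (w (c ! j)) * t e else 0)"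
    by (rule sum.swap)
  also have "\<dots> = (\<Sum>j<length c. of_int (w (c ! j)) * t {c ! j, iv (c ! j)})"
  proof (rule sum.cong[OF refl])
    fix j assume "j \<in> {..<length c}"
    then have "{c ! j, iv (c ! j)} \<in> E" using cE by simp
    then show "(\<Sum>e\<in>E. if {c ! j, iv (c ! j)} = e then of_int (w (c ! j)) * t e else 0) = of_int (w (c ! j)) * t {c ! j, iv (c ! j)}"
      using fE by (simp add: sum.delta)
  qed
  finally show ?thesis .
qed

lemma polyhedral_face:
  fixes H :: "'h set" and w :: "'h \<Rightarrow> int"
  assumes g: "is_graph V H endp iv" and T: "T \<subseteq> edges H iv"
  shows "polyhedral_cone (edges H iv) (cone_w H endp iv w \<inter> Zs T)"
proof -
  define E where "E = edges H iv"
  define Cyc where "Cyc = {c. is_cycle H endp iv c}"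
  define dl where "dl = (\<lambda>(e0::'h set) (e::'h set). if e = e0 then (1::rat) else 0)"
  define a where "a = (\<lambda>c (e::'h set). \<Sum>j<length c. if {c ! j, iv (c ! j)} = e then (of_int (w (c ! j))::rat) else 0)"
  define S where "S = (\<lambda>c (t::'h set \<Rightarrow> rat). \<Sum>j<length c. of_int (w (c ! j)) * t {c ! j, iv (c ! j)})"
  define U where "U = dl ` E \<union> (\<lambda>e0 e. - dl e0 e) ` T \<union> a ` Cyc \<union> (\<lambda>c e. - a c e) ` Cyc"
  have fE: "finite E" unfolding E_def using finite_edges[OF g] .
  have fC: "finite Cyc" unfolding Cyc_def using finite_cycles[OF g] .
  have fU: "finite U" unfolding U_def using fE fC T finite_subset[OF T] unfolding E_def by blast
  have TE: "T \<subseteq> E" using T unfolding E_def .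
  have cE: "\<forall>j<length c. {c ! j, iv (c ! j)} \<in> E" if "c \<in> Cyc" for c
  proof (intro allI impI)
    fix j assume "j < length c"
    then have "c ! j \<in> set c" by simp
    then have "c ! j \<in> H" "iv (c ! j) \<noteq> c ! j" using that unfolding Cyc_def is_cycle_def by blast+
    then show "{c ! j, iv (c ! j)} \<in> E" unfolding E_def by (rule edge_in)
  qed
  have pdl: "pairing E (dl e0) t = t e0" if "e0 \<in> E" for e0 t
    unfolding dl_def using pairing_delta[OF fE that] .
  have pndl: "pairing E (\<lambda>e. - dl e0 e) t = - t e0" if "e0 \<in> E" for e0 t
    using pairing_neg[of E "dl e0" t] pdl[OF that] by simp
  have pa: "pairing E (a c) t = S c t" if "c \<in> Cyc" for c t
    unfolding a_def S_def using pairing_cyc[OF fE cE[OF that]] .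
  have pna: "pairing E (\<lambda>e. - a c e) t = - S c t" if "c \<in> Cyc" for c t
    using pairing_neg[of E "a c" t] pa[OF that] by simp
  have "cone_w H endp iv w \<inter> Zs T = {t \<in> QE E. \<forall>u\<in>U. pairing E u t \<ge> 0}"
  proof
    show "cone_w H endp iv w \<inter> Zs T \<subseteq> {t \<in> QE E. \<forall>u\<in>U. pairing E u t \<ge> 0}"
    proof
      fix t assume t: "t \<in> cone_w H endp iv w \<inter> Zs T"
      then have tq: "t \<in> QE E" and tn: "\<forall>e\<in>E. t e \<ge> 0" and tz: "\<forall>e\<in>T. t e = 0"
        and ts: "\<forall>c\<in>Cyc. S c t = 0"
        unfolding cone_w_def QE_nonneg_def E_def Zs_def Cyc_def S_def by auto
      have "\<forall>u\<in>U. pairing E u t \<ge> 0"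
        unfolding U_def using tn tz ts TE pdl pndl pa pna by auto
      then show "t \<in> {t \<in> QE E. \<forall>u\<in>U. pairing E u t \<ge> 0}" using tq by blast
    qed
  next
    show "{t \<in> QE E. \<forall>u\<in>U. pairing E u t \<ge> 0} \<subseteq> cone_w H endp iv w \<inter> Zs T"
    proof
      fix t assume t: "t \<in> {t \<in> QE E. \<forall>u\<in>U. pairing E u t \<ge> 0}"
      then have tq: "t \<in> QE E" and tu: "\<forall>u\<in>U. pairing E u t \<ge> 0" by auto
      have tn: "\<forall>e\<in>E. t e \<ge> 0"
      proof
        fix e assume e: "e \<in> E"
        then have "dl e \<in> U" unfolding U_def by blast
        then show "t e \<ge> 0" using tu pdl[OF e] by fastforce
      qed
      have tz: "\<forall>e\<in>T. t e = 0"
      proof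
        fix e assume e: "e \<in> T"
        then have "(\<lambda>e'. - dl e e') \<in> U" unfolding U_def by blast
        then have "- t e \<ge> 0" using tu pndl[of e t] e TE by fastforce
        moreover have "t e \<ge> 0" using tn e TE by blast
        ultimately show "t e = 0" by linarith
      qed
      have ts: "S c t = 0" if c: "c \<in> Cyc" for c
      proof -
        have "a c \<in> U" "(\<lambda>e. - a c e) \<in> U" unfolding U_def using c by blast+
        then have "S c t \<ge> 0" "- S c t \<ge> 0" using tu pa[OF c] pna[OF c] by fastforce+
        then show ?thesis by linarith
      qed
      show "t \<in> cone_w H endp iv w \<inter> Zs T"
        unfolding cone_w_def QE_nonneg_def Zs_def
        using tq tn tz ts unfolding E_def Cyc_def S_def by blast
    qed
  qed
  then show ?thesis unfolding polyhedral_cone_def E_def using fU unfolding E_def by blast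
qed


lemma fam_rep:
  assumes g: "is_graph V H endp iv"
    and F: "face_of_cone (edges H iv) (cone_w H endp iv w) F"
  shows "\<exists>T\<subseteq>edges H iv. F = cone_w H endp iv w \<inter> Zs T \<and> (\<exists>t0\<in>F. \<forall>e\<in>edges H iv - T. t0 e > 0)"
  using face_char[OF finite_edges[OF g] lincone_cone_w F] .

lemma bnd_nonneg: "bnd V H endp iv gen k lw \<ge> 0"
  unfolding bnd_def by (intro add_nonneg_nonneg sum_nonneg) auto

lemma fam_finite:
  fixes H :: "'h set"
  assumes g: "is_graph V H endp iv"
  shows "finite {F. \<exists>w\<in>weightings V H endp iv gen k lw. face_of_cone (edges H iv) (cone_w H endp iv w) F}"
proof -
  define B where "B = bnd V H endp iv gen k lw"
  define Phi where "Phi = {f::'h \<Rightarrow> int. \<forall>x. (x \<in> H \<longrightarrow> f x \<in> {-B..B}) \<and> (x \<notin> H \<longrightarrow> f x = 0)}"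
  have fH: "finite H" using g unfolding is_graph_def by blast
  have fPhi: "finite Phi" unfolding Phi_def by (rule finite_set_of_finite_funs[OF fH]) simp
  have fP: "finite (Pow (edges H iv) \<times> Phi)" using finite_edges[OF g] fPhi by simp
  have sub: "{F. \<exists>w\<in>weightings V H endp iv gen k lw. face_of_cone (edges H iv) (cone_w H endp iv w) F}
      \<subseteq> (\<lambda>(T, f). cone_w H endp iv f \<inter> Zs T) ` (Pow (edges H iv) \<times> Phi)"
  proof
    fix F assume "F \<in> {F. \<exists>w\<in>weightings V H endp iv gen k lw. face_of_cone (edges H iv) (cone_w H endp iv w) F}"
    then obtain w where w: "w \<in> weightings V H endp iv gen k lw" and Fw: "face_of_cone (edges H iv) (cone_w H endp iv w) F"
      by blast
    obtain T t0 where T: "T \<subseteq> edges H iv" "F = cone_w H endp iv w \<inter> Zs T" "t0 \<in> F"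
      "\<forall>e\<in>edges H iv - T. t0 e > 0" using fam_rep[OF g Fw] by blast
    define f where "f = (\<lambda>h. if h \<in> H \<and> iv h \<noteq> h \<and> {h, iv h} \<notin> T then w h else 0)"
    have t0c: "t0 \<in> cone_w H endp iv w" using T by blast
    have fPh: "f \<in> Phi" unfolding Phi_def
    proof (intro CollectI allI conjI impI)
      fix x assume x: "x \<in> H"
      show "f x \<in> {-B..B}"
      proof (cases "iv x \<noteq> x \<and> {x, iv x} \<notin> T")
        case True
        have "{x, iv x} \<in> edges H iv" using x True by (intro edge_in) auto
        then have "{x, iv x} \<in> edges H iv - T" using True by simp
        then have "t0 {x, iv x} > 0" using T(4) by blast
        then have "\<bar>w x\<bar> \<le> B" unfolding B_def using bound_weight[OF g w t0c x] True by blast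
        then show ?thesis unfolding f_def using True x by (simp add: abs_le_iff)
      next
        case False
        then show ?thesis unfolding f_def using bnd_nonneg[of V H endp iv gen k lw] unfolding B_def by auto
      qed
    next
      fix x assume "x \<notin> H" then show "f x = 0" unfolding f_def by simp
    qed
    have ag: "\<forall>h\<in>H. iv h \<noteq> h \<longrightarrow> w h = f h \<or> {h, iv h} \<in> T" unfolding f_def by auto
    have "F = cone_w H endp iv f \<inter> Zs T"
      using T(2) cone_agree[OF ag] by simp
    moreover have "(T, f) \<in> Pow (edges H iv) \<times> Phi" using T(1) fPh by simp
    ultimately show "F \<in> (\<lambda>(T, f). cone_w H endp iv f \<inter> Zs T) ` (Pow (edges H iv) \<times> Phi)"
      by (intro image_eqI[where x="(T, f)"]) simp_all
  qed
  show ?thesis using finite_subset[OF sub finite_imageI[OF fP]] .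
qed

theorem corollary3p11:
  fixes V :: "'v set" and H :: "'h set" and endp :: "'h \<Rightarrow> 'v" and iv :: "'h \<Rightarrow> 'h"
    and gen :: "'v \<Rightarrow> nat" and k :: int and lw :: "'h \<Rightarrow> int"
  assumes "is_graph V H endp iv"
    and "connected_graph V H endp iv"
    and "(\<Sum>h\<in>{h\<in>H. iv h = h}. lw h) = - k * (2 * graph_genus V H iv gen - 2)"
  shows "finite_fan (edges H iv)
           {F. \<exists>w\<in>weightings V H endp iv gen k lw. face_of_cone (edges H iv) (cone_w H endp iv w) F}"
proof -
  note g = assms(1)
  define E where "E = edges H iv"
  define W where "W = weightings V H endp iv gen k lw"
  define Fam where "Fam = {F. \<exists>w\<in>W. face_of_cone E (cone_w H endp iv w) F}"
  have fE: "finite E" unfolding E_def using finite_edges[OF g] .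
  have rep: "\<exists>w\<in>W. \<exists>T\<subseteq>E. C = cone_w H endp iv w \<inter> Zs T" if CF: "C \<in> Fam" for C
  proof -
    obtain w where w: "w \<in> W" "face_of_cone E (cone_w H endp iv w) C" using CF unfolding Fam_def by blast
    then show ?thesis using fam_rep[OF g, of w C] unfolding E_def by blast
  qed
  have inF: "cone_w H endp iv w \<inter> Zs T \<in> Fam" if "w \<in> W" "T \<subseteq> E" for w T
    using face_Z[OF fE _ that(2), of "cone_w H endp iv w"] cone_nonneg that(1)
    unfolding Fam_def E_def by blast
  have c1: "finite Fam" unfolding Fam_def E_def W_def using fam_finite[OF g] .
  have c2: "\<forall>C\<in>Fam. polyhedral_cone E C \<and> C \<subseteq> QE_nonneg E"
  proof
    fix C assume "C \<in> Fam"
    then obtain w T where "w \<in> W" "T \<subseteq> E" "C = cone_w H endp iv w \<inter> Zs T" using rep by blast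
    then show "polyhedral_cone E C \<and> C \<subseteq> QE_nonneg E"
      using polyhedral_face[OF g, of T w] cone_nonneg[of H endp iv w] unfolding E_def by blast
  qed
  have c3: "\<forall>C\<in>Fam. \<forall>F. face_of_cone E C F \<longrightarrow> F \<in> Fam"
  proof (intro ballI allI impI)
    fix C F assume C: "C \<in> Fam" and F: "face_of_cone E C F"
    obtain w T where wT: "w \<in> W" "T \<subseteq> E" "C = cone_w H endp iv w \<inter> Zs T" using rep[OF C] by blast
    have L: "lincone E C" using wT(3) lincone_Z[OF lincone_cone_w] unfolding E_def by blast
    obtain T' where T': "T' \<subseteq> E" "F = C \<inter> Zs T'" using face_char[OF fE L F] by blast
    have "F = cone_w H endp iv w \<inter> Zs (T \<union> T')" using T' wT by (simp add: Zs_Un Int_assoc)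
    moreover have "T \<union> T' \<subseteq> E" using T' wT by blast
    ultimately show "F \<in> Fam" using inF wT(1) by blast
  qed
  have c4: "\<forall>C1\<in>Fam. \<forall>C2\<in>Fam. face_of_cone E C1 (C1 \<inter> C2) \<and> face_of_cone E C2 (C1 \<inter> C2)"
  proof (intro ballI)
    fix C1 C2 assume C1: "C1 \<in> Fam" and C2: "C2 \<in> Fam"
    obtain w1 T1 where 1: "w1 \<in> W" "T1 \<subseteq> E" "C1 = cone_w H endp iv w1 \<inter> Zs T1" using rep[OF C1] by blast
    obtain w2 T2 where 2: "w2 \<in> W" "T2 \<subseteq> E" "C2 = cone_w H endp iv w2 \<inter> Zs T2" using rep[OF C2] by blast
    have i12: "cone_w H endp iv w1 \<inter> cone_w H endp iv w2 = cone_w H endp iv w1 \<inter> Zs (Dw H iv w1 w2)"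
      using inter_cone[OF g] 1(1) 2(1) unfolding W_def by blast
    have i21: "cone_w H endp iv w2 \<inter> cone_w H endp iv w1 = cone_w H endp iv w2 \<inter> Zs (Dw H iv w2 w1)"
      using inter_cone[OF g] 1(1) 2(1) unfolding W_def by blast
    have e1: "C1 \<inter> C2 = C1 \<inter> Zs (Dw H iv w1 w2 \<union> T2)"
    proof -
      have "C1 \<inter> C2 = (cone_w H endp iv w1 \<inter> cone_w H endp iv w2) \<inter> Zs T1 \<inter> Zs T2" using 1 2 by blast
      also have "\<dots> = cone_w H endp iv w1 \<inter> Zs (Dw H iv w1 w2) \<inter> Zs T1 \<inter> Zs T2" using i12 by simp
      also have "\<dots> = C1 \<inter> Zs (Dw H iv w1 w2 \<union> T2)" using 1 by (auto simp: Zs_Un)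
      finally show ?thesis .
    qed
    have e2: "C1 \<inter> C2 = C2 \<inter> Zs (Dw H iv w2 w1 \<union> T1)"
    proof -
      have "C1 \<inter> C2 = (cone_w H endp iv w2 \<inter> cone_w H endp iv w1) \<inter> Zs T2 \<inter> Zs T1" using 1 2 by blast
      also have "\<dots> = cone_w H endp iv w2 \<inter> Zs (Dw H iv w2 w1) \<inter> Zs T2 \<inter> Zs T1" using i21 by simp
      also have "\<dots> = C2 \<inter> Zs (Dw H iv w2 w1 \<union> T1)" using 2 by (auto simp: Zs_Un)
      finally show ?thesis .
    qed
    have s1: "C1 \<subseteq> QE_nonneg E" "C2 \<subseteq> QE_nonneg E" using c2 C1 C2 by blast+
    have d1: "Dw H iv w1 w2 \<union> T2 \<subseteq> E" "Dw H iv w2 w1 \<union> T1 \<subseteq> E" using Dw_sub 1 2 unfolding E_def by blast+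
    show "face_of_cone E C1 (C1 \<inter> C2) \<and> face_of_cone E C2 (C1 \<inter> C2)"
      using face_Z[OF fE s1(1) d1(1)] face_Z[OF fE s1(2) d1(2)] e1 e2 by simp
  qed
  show ?thesis unfolding finite_fan_def using c1 c2 c3 c4 unfolding Fam_def E_def W_def by blast
qed

end
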